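(* Let $X,Y\in\mathcal L^2$ with $X$ bi-atomic. If $(X,Y)$ is quasi-independent, then $X$ and $Y$ are independent. In particular, $(X,Y)\in\mathrm{IC}_0$ if and only if $X$ and $Y$ are independent.
   Context: $\mathcal L^2$ is the set of non-degenerate real random variables with finite variance. $X$ is bi-atomic if its support $\{x:\mathbb P(x-\epsilon<X\le x+\epsilon)>0\ \forall\epsilon>0\}$ has exactly two points. With $H$ the joint distribution function of $(X,Y)$ and $F,G$ the distribution functions of $X,Y$, $(X,Y)$ is quasi-independent if $\frac{H(x,y)+H(y,x)}{2}=\frac12F(x)G(y)+\frac12F(y)G(x)$ for all $x,y\in\mathbb R$. $(X,Y)\in\mathrm{IC}_0$ means $\mathrm{Corr}(X,Y)=\mathrm{Corr}(g(X),g(Y))=0$ for every measurable $g$ with $g(X),g(Y)\in\mathcal L^2$. *)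

theory Defs
  imports "HOL-Probability.Probability"
begin

definition expect :: "'a measure \<Rightarrow> ('a \<Rightarrow> real) \<Rightarrow> real" where
  "expect M X = integral\<^sup>L M X"

definition covar :: "'a measure \<Rightarrow> ('a \<Rightarrow> real) \<Rightarrow> ('a \<Rightarrow> real) \<Rightarrow> real" where
  "covar M X Y = expect M (\<lambda>w. (X w - expect M X) * (Y w - expect M Y))"

definition var :: "'a measure \<Rightarrow> ('a \<Rightarrow> real) \<Rightarrow> real" where
  "var M X = covar M X X"

definition corr :: "'a measure \<Rightarrow> ('a \<Rightarrow> real) \<Rightarrow> ('a \<Rightarrow> real) \<Rightarrow> real" where
  "corr M X Y = covar M X Y / (sqrt (var M X) * sqrt (var M Y))"

definition L2 :: "'a measure \<Rightarrow> ('a \<Rightarrow> real) \<Rightarrow> bool" where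
  "L2 M X \<longleftrightarrow> X \<in> borel_measurable M \<and> integrable M (\<lambda>w. (X w)\<^sup>2)
      \<and> \<not> (\<exists>c. AE w in M. X w = c)"

definition supp :: "'a measure \<Rightarrow> ('a \<Rightarrow> real) \<Rightarrow> real set" where
  "supp M X = {x. \<forall>e>0. measure M {w \<in> space M. x - e < X w \<and> X w \<le> x + e} > 0}"

definition biatomic :: "'a measure \<Rightarrow> ('a \<Rightarrow> real) \<Rightarrow> bool" where
  "biatomic M X \<longleftrightarrow> finite (supp M X) \<and> card (supp M X) = 2"

definition cdf1 :: "'a measure \<Rightarrow> ('a \<Rightarrow> real) \<Rightarrow> real \<Rightarrow> real" where
  "cdf1 M X x = measure M {w \<in> space M. X w \<le> x}"

definition cdf2 :: "'a measure \<Rightarrow> ('a \<Rightarrow> real) \<Rightarrow> ('a \<Rightarrow> real) \<Rightarrow> real \<Rightarrow> real \<Rightarrow> real" where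
  "cdf2 M X Y x y = measure M {w \<in> space M. X w \<le> x \<and> Y w \<le> y}"

definition quasi_indep :: "'a measure \<Rightarrow> ('a \<Rightarrow> real) \<Rightarrow> ('a \<Rightarrow> real) \<Rightarrow> bool" where
  "quasi_indep M X Y \<longleftrightarrow> (\<forall>x y.
      (cdf2 M X Y x y + cdf2 M X Y y x) / 2
        = cdf1 M X x * cdf1 M Y y / 2 + cdf1 M X y * cdf1 M Y x / 2)"

definition IC0 :: "'a measure \<Rightarrow> ('a \<Rightarrow> real) \<Rightarrow> ('a \<Rightarrow> real) \<Rightarrow> bool" where
  "IC0 M X Y \<longleftrightarrow> corr M X Y = 0 \<and>
     (\<forall>g \<in> borel_measurable borel. L2 M (g \<circ> X) \<and> L2 M (g \<circ> Y) \<longrightarrow>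
        corr M (g \<circ> X) (g \<circ> Y) = 0)"

end

theory Submission
  imports Defs
begin

context prob_space begin


lemma prob_Collect_1:
  assumes "{w \<in> space M. P w} \<in> events" "AE w in M. P w"
  shows "prob {w \<in> space M. P w} = 1"
  using assms by (subst prob_eq_1) (auto elim!: eventually_mono)

lemma indep_from_K:
  fixes X Y :: "'a \<Rightarrow> real"
  assumes [measurable]: "X \<in> borel_measurable M" "Y \<in> borel_measurable M"
    and ab: "a \<noteq> b" and AEX: "AE w in M. X w = a \<or> X w = b"
    and K: "\<And>B. B \<in> sets borel \<Longrightarrow>
      prob {w \<in> space M. X w = a \<and> Y w \<in> B} = prob {w \<in> space M. X w = a} * prob {w \<in> space M. Y w \<in> B}"
  shows "indep_var borel X borel Y"
proof -
  have Int_stable: "Int_stable {Z -` A \<inter> space M |A. A \<in> sets (borel::real measure)}" for Z :: "'a \<Rightarrow> real"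
  proof (safe intro!: Int_stableI)
    fix A B assume "A \<in> sets (borel::real measure)" "B \<in> sets (borel::real measure)"
    then show "\<exists>C. (Z -` A \<inter> space M) \<inter> (Z -` B \<inter> space M) = (Z -` C \<inter> space M) \<and> C \<in> sets borel"
      by (intro exI[of _ "A \<inter> B"]) auto
  qed
  define p where "p = prob {w \<in> space M. X w = a}"
  have pb: "prob {w \<in> space M. X w = b} = 1 - p"
  proof -
    have "prob {w \<in> space M. X w = a \<or> X w = b} = 1"
      by (rule prob_Collect_1) (measurable, rule eventually_mono[OF AEX], auto)
    moreover have "prob {w \<in> space M. X w = a \<or> X w = b} = p + prob {w \<in> space M. X w = b}"
      unfolding p_def using ab
      by (subst finite_measure_Union[symmetric]) (auto intro!: arg_cong[where f=prob])
    ultimately show ?thesis by simp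
  qed
  have Kb: "prob {w \<in> space M. X w = b \<and> Y w \<in> B} = (1 - p) * prob {w \<in> space M. Y w \<in> B}"
    if [measurable]: "B \<in> sets borel" for B
  proof -
    have "prob {w \<in> space M. Y w \<in> B} = prob {w \<in> space M. (X w = a \<and> Y w \<in> B) \<or> (X w = b \<and> Y w \<in> B)}"
      by (rule finite_measure_eq_AE) (use AEX in auto)
    also have "\<dots> = prob {w \<in> space M. X w = a \<and> Y w \<in> B} + prob {w \<in> space M. X w = b \<and> Y w \<in> B}"
      using ab by (subst finite_measure_Union[symmetric]) (auto intro!: arg_cong[where f=prob])
    finally show ?thesis using K[OF that] unfolding p_def by (simp add: algebra_simps)
  qed
  show ?thesis unfolding indep_var_eq
  proof (intro conjI indep_set_sigma_sets Int_stable)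
    show "random_variable borel X" "random_variable borel Y" by simp_all
    show "indep_set {X -` A \<inter> space M |A. A \<in> sets borel} {Y -` A \<inter> space M |A. A \<in> sets borel}"
    proof (safe intro!: indep_setI)
      fix A B :: "real set" assume AB [measurable]: "A \<in> sets borel" "B \<in> sets borel"
      have e1: "X -` A \<inter> space M \<inter> (Y -` B \<inter> space M) = {w \<in> space M. X w \<in> A \<and> Y w \<in> B}" by auto
      have e2: "X -` A \<inter> space M = {w \<in> space M. X w \<in> A}" by auto
      have e3: "Y -` B \<inter> space M = {w \<in> space M. Y w \<in> B}" by auto
      have "prob {w \<in> space M. X w \<in> A \<and> Y w \<in> B} = prob {w \<in> space M. X w \<in> A} * prob {w \<in> space M. Y w \<in> B}"
      proof (cases "a \<in> A"; cases "b \<in> A")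
        assume "a \<in> A" "b \<in> A"
        moreover have "prob {w \<in> space M. X w \<in> A \<and> Y w \<in> B} = prob {w \<in> space M. Y w \<in> B}"
          by (rule finite_measure_eq_AE) (use AEX \<open>a \<in> A\<close> \<open>b \<in> A\<close> in auto)
        moreover have "prob {w \<in> space M. X w \<in> A} = 1"
          by (rule prob_Collect_1) (measurable, rule eventually_mono[OF AEX], use \<open>a \<in> A\<close> \<open>b \<in> A\<close> in auto)
        ultimately show ?thesis by simp
      next
        assume "a \<in> A" "b \<notin> A"
        moreover have "prob {w \<in> space M. X w \<in> A \<and> Y w \<in> B} = prob {w \<in> space M. X w = a \<and> Y w \<in> B}"
          by (rule finite_measure_eq_AE) (use AEX \<open>a \<in> A\<close> \<open>b \<notin> A\<close> in auto)
        moreover have "prob {w \<in> space M. X w \<in> A} = p"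
          unfolding p_def by (rule finite_measure_eq_AE) (use AEX \<open>a \<in> A\<close> \<open>b \<notin> A\<close> in auto)
        ultimately show ?thesis using K[OF AB(2)] by (simp add: p_def)
      next
        assume "a \<notin> A" "b \<in> A"
        moreover have "prob {w \<in> space M. X w \<in> A \<and> Y w \<in> B} = prob {w \<in> space M. X w = b \<and> Y w \<in> B}"
          by (rule finite_measure_eq_AE) (use AEX \<open>a \<notin> A\<close> \<open>b \<in> A\<close> in auto)
        moreover have "prob {w \<in> space M. X w \<in> A} = prob {w \<in> space M. X w = b}"
          by (rule finite_measure_eq_AE) (use AEX \<open>a \<notin> A\<close> \<open>b \<in> A\<close> in auto)
        ultimately show ?thesis using Kb[OF AB(2)] pb by simp
      next
        assume "a \<notin> A" "b \<notin> A"
        moreover have "prob {w \<in> space M. X w \<in> A \<and> Y w \<in> B} = prob {}"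
          by (rule finite_measure_eq_AE) (use AEX \<open>a \<notin> A\<close> \<open>b \<notin> A\<close> in auto)
        moreover have "prob {w \<in> space M. X w \<in> A} = prob {}"
          by (rule finite_measure_eq_AE) (use AEX \<open>a \<notin> A\<close> \<open>b \<notin> A\<close> in auto)
        ultimately show ?thesis by simp
      qed
      then show "prob (X -` A \<inter> space M \<inter> (Y -` B \<inter> space M)) = prob (X -` A \<inter> space M) * prob (Y -` B \<inter> space M)"
        using e1 e2 e3 by metis
    qed (auto)
  qed
qed




lemma AE_in_supp:
  assumes [measurable]: "X \<in> borel_measurable M"
  shows "AE w in M. X w \<in> supp M X"
proof -
  define R where "R = {q \<in> \<rat> \<times> \<rat>. prob {w \<in> space M. fst q < X w \<and> X w \<le> snd q} = 0}"
  have cR: "countable R"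
    unfolding R_def by (rule countable_subset[of _ "\<rat> \<times> \<rat>"]) (auto intro: countable_rat)
  have "AE w in M. \<forall>q\<in>R. \<not> (fst q < X w \<and> X w \<le> snd q)"
  proof (rule AE_ball_countable'[OF _ cR])
    fix q assume "q \<in> R"
    then have "prob {w \<in> space M. fst q < X w \<and> X w \<le> snd q} = 0" by (simp add: R_def)
    then show "AE w in M. \<not> (fst q < X w \<and> X w \<le> snd q)"
      by (subst AE_iff_measurable[of "{w \<in> space M. fst q < X w \<and> X w \<le> snd q}"])
         (auto simp: emeasure_eq_measure)
  qed
  then show ?thesis
  proof (rule AE_mp, intro AE_I2 impI)
    fix w assume w: "w \<in> space M" and H: "\<forall>q\<in>R. \<not> (fst q < X w \<and> X w \<le> snd q)"
    show "X w \<in> supp M X"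
    proof (rule ccontr)
      assume "X w \<notin> supp M X"
      then obtain e where e: "e > 0" and m: "\<not> measure M {v \<in> space M. X w - e < X v \<and> X v \<le> X w + e} > 0"
        unfolding supp_def by auto
      obtain q1 where q1: "q1 \<in> \<rat>" "X w - e < q1" "q1 < X w" using Rats_dense_in_real[of "X w - e" "X w"] e by auto
      obtain q2 where q2: "q2 \<in> \<rat>" "X w < q2" "q2 < X w + e" using Rats_dense_in_real[of "X w" "X w + e"] e by auto
      have "prob {v \<in> space M. q1 < X v \<and> X v \<le> q2} \<le> prob {v \<in> space M. X w - e < X v \<and> X v \<le> X w + e}"
        by (rule finite_measure_mono) (use q1 q2 in auto)
      then have "prob {v \<in> space M. q1 < X v \<and> X v \<le> q2} = 0" using m measure_nonneg
        by (smt (verit))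
      then have "(q1, q2) \<in> R" using q1 q2 by (simp add: R_def)
      with H q1 q2 show False by auto
    qed
  qed
qed




lemma cdf_to_borel:
  fixes Y :: "'a \<Rightarrow> real"
  assumes [measurable]: "Y \<in> borel_measurable M" and E[measurable]: "E \<in> events"
    and H: "\<And>y. prob {w \<in> space M. w \<in> E \<and> Y w \<le> y} = prob E * prob {w \<in> space M. Y w \<le> y}"
    and B: "B \<in> sets borel"
  shows "prob {w \<in> space M. w \<in> E \<and> Y w \<in> B} = prob E * prob {w \<in> space M. Y w \<in> B}"
proof -
  have sb: "sets (borel :: real measure) = sigma_sets UNIV (range atMost)"
    by (subst borel_eq_atMost) (simp add: sets_measure_of)
  have Bs: "B \<in> sigma_sets UNIV (range atMost)" using B sb by simp
  have ES: "E \<subseteq> space M" using E by (rule sets.sets_into_space)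
  have IS: "Int_stable (range (atMost :: real \<Rightarrow> real set))"
    by (auto simp: Int_stable_def intro!: exI[of _ "min _ _"])
  have cl: "range atMost \<subseteq> Pow (UNIV :: real set)" by auto
  show ?thesis using IS cl Bs
  proof (induction rule: sigma_sets_induct_disjoint)
    case (basic A)
    then obtain y where "A = {..y}" by auto
    then show "prob {w \<in> space M. w \<in> E \<and> Y w \<in> A} = prob E * prob {w \<in> space M. Y w \<in> A}"
      using H[of y] by simp
  next
    show "prob {w \<in> space M. w \<in> E \<and> Y w \<in> {}} = prob E * prob {w \<in> space M. Y w \<in> {}}" by simp
  next
    fix A :: "real set" assume As: "A \<in> sigma_sets UNIV (range atMost)"
      and IH: "prob {w \<in> space M. w \<in> E \<and> Y w \<in> A} = prob E * prob {w \<in> space M. Y w \<in> A}"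
    have [measurable]: "A \<in> sets borel" using As sb by simp
    have "prob {w \<in> space M. w \<in> E \<and> Y w \<in> UNIV - A} = prob (E - {w \<in> space M. w \<in> E \<and> Y w \<in> A})"
      using ES by (intro arg_cong[where f=prob]) auto
    also have "\<dots> = prob E - prob {w \<in> space M. w \<in> E \<and> Y w \<in> A}"
      by (rule finite_measure_Diff) auto
    finally have c1: "prob {w \<in> space M. w \<in> E \<and> Y w \<in> UNIV - A} = prob E - prob {w \<in> space M. w \<in> E \<and> Y w \<in> A}" .
    have "prob {w \<in> space M. Y w \<in> UNIV - A} = prob (space M - {w \<in> space M. Y w \<in> A})"
      by (intro arg_cong[where f=prob]) auto
    also have "\<dots> = 1 - prob {w \<in> space M. Y w \<in> A}"
      by (subst finite_measure_Diff) (auto simp: prob_space)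
    finally have c2: "prob {w \<in> space M. Y w \<in> UNIV - A} = 1 - prob {w \<in> space M. Y w \<in> A}" .
    show "prob {w \<in> space M. w \<in> E \<and> Y w \<in> UNIV - A} = prob E * prob {w \<in> space M. Y w \<in> UNIV - A}"
    proof -
      have "prob E * prob {w \<in> space M. Y w \<in> UNIV - A} = prob E - prob E * prob {w \<in> space M. Y w \<in> A}"
        by (simp only: c2 right_diff_distrib mult_1_right)
      then show ?thesis using c1 IH by linarith
    qed
  next
    fix A :: "nat \<Rightarrow> real set" assume dA: "disjoint_family A" and rA: "range A \<subseteq> sigma_sets UNIV (range atMost)"
      and IH: "\<And>i. prob {w \<in> space M. w \<in> E \<and> Y w \<in> A i} = prob E * prob {w \<in> space M. Y w \<in> A i}"
    have [measurable]: "A i \<in> sets borel" for i using rA sb by auto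
    have "(\<lambda>i. prob {w \<in> space M. w \<in> E \<and> Y w \<in> A i}) sums prob (\<Union>i. {w \<in> space M. w \<in> E \<and> Y w \<in> A i})"
      using dA by (intro finite_measure_UNION) (auto simp: disjoint_family_on_def)
    moreover have "(\<lambda>i. prob {w \<in> space M. Y w \<in> A i}) sums prob (\<Union>i. {w \<in> space M. Y w \<in> A i})"
      using dA by (intro finite_measure_UNION) (auto simp: disjoint_family_on_def)
    then have "(\<lambda>i. prob E * prob {w \<in> space M. Y w \<in> A i}) sums (prob E * prob (\<Union>i. {w \<in> space M. Y w \<in> A i}))"
      by (rule sums_mult)
    ultimately have "prob (\<Union>i. {w \<in> space M. w \<in> E \<and> Y w \<in> A i}) = prob E * prob (\<Union>i. {w \<in> space M. Y w \<in> A i})"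
      using sums_unique2 by (simp add: IH)
    moreover have "(\<Union>i. {w \<in> space M. w \<in> E \<and> Y w \<in> A i}) = {w \<in> space M. w \<in> E \<and> Y w \<in> (\<Union>i. A i)}" by auto
    moreover have "(\<Union>i. {w \<in> space M. Y w \<in> A i}) = {w \<in> space M. Y w \<in> (\<Union>i. A i)}" by auto
    ultimately show "prob {w \<in> space M. w \<in> E \<and> Y w \<in> (\<Union>i. A i)} = prob E * prob {w \<in> space M. Y w \<in> (\<Union>i. A i)}"
      by simp
  qed
qed




lemma quasi_K:
  fixes X Y :: "'a \<Rightarrow> real"
  assumes [measurable]: "X \<in> borel_measurable M" "Y \<in> borel_measurable M"
    and ab: "a < b" and AEX: "AE w in M. X w = a \<or> X w = b"
    and Q: "quasi_indep M X Y"
  shows "prob {w \<in> space M. X w = a \<and> Y w \<le> y} = prob {w \<in> space M. X w = a} * prob {w \<in> space M. Y w \<le> y}"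
proof -
  define K where "K y = prob {w \<in> space M. X w = a \<and> Y w \<le> y}" for y
  define G where "G y = prob {w \<in> space M. Y w \<le> y}" for y
  define p where "p = prob {w \<in> space M. X w = a}"
  have Q': "(cdf2 M X Y a z + cdf2 M X Y z a) / 2 = cdf1 M X a * cdf1 M Y z / 2 + cdf1 M X z * cdf1 M Y a / 2" for z
    using Q unfolding quasi_indep_def by blast
  have Ha: "cdf2 M X Y a z = K z" for z
    unfolding cdf2_def K_def by (rule finite_measure_eq_AE) (use AEX ab in auto)
  have Fa: "cdf1 M X a = p"
    unfolding cdf1_def p_def by (rule finite_measure_eq_AE) (use AEX ab in auto)
  have G: "cdf1 M Y z = G z" for z unfolding cdf1_def G_def ..
  have eq: "K z + cdf2 M X Y z a = p * G z + cdf1 M X z * G a" for z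
    using Q'[of z] unfolding Ha Fa G by (simp add: field_simps)
  have Ka: "K a = p * G a"
  proof -
    have "cdf2 M X Y a a = K a" by (rule Ha)
    then show ?thesis using eq[of a] Fa by simp
  qed
  show ?thesis
  proof (cases "y < a")
    case True
    have "cdf2 M X Y y a = prob {}"
      unfolding cdf2_def by (rule finite_measure_eq_AE) (use AEX ab True in auto)
    moreover have "cdf1 M X y = prob {}"
      unfolding cdf1_def by (rule finite_measure_eq_AE) (use AEX ab True in auto)
    ultimately show ?thesis using eq[of y] unfolding K_def G_def p_def by simp
  next
    case False
    show ?thesis
    proof (cases "y < b")
      case True
      have "cdf2 M X Y y a = K a"
        unfolding cdf2_def K_def by (rule finite_measure_eq_AE) (use AEX ab True False in auto)
      moreover have "cdf1 M X y = p"
        unfolding cdf1_def p_def by (rule finite_measure_eq_AE) (use AEX ab True False in auto)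
      ultimately show ?thesis using eq[of y] Ka unfolding K_def G_def p_def by simp
    next
      case False2: False
      have "cdf2 M X Y y a = G a"
        unfolding cdf2_def G_def by (rule finite_measure_eq_AE) (use AEX ab False2 False in auto)
      moreover have "cdf1 M X y = prob (space M)"
        unfolding cdf1_def by (rule finite_measure_eq_AE) (use AEX ab False2 False in auto)
      ultimately show ?thesis using eq[of y] unfolding K_def G_def p_def by (simp add: prob_space)
    qed
  qed
qed




lemma prob_split_Y:
  fixes Y :: "'a \<Rightarrow> real"
  assumes [measurable]: "Y \<in> borel_measurable M" "Measurable.pred M P" "S \<in> sets borel" "T \<in> sets borel"
    and d: "S \<inter> T = {}"
  shows "prob {w \<in> space M. P w \<and> Y w \<in> S \<union> T} = prob {w \<in> space M. P w \<and> Y w \<in> S} + prob {w \<in> space M. P w \<and> Y w \<in> T}"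
  using d by (subst finite_measure_Union[symmetric]) (auto intro!: arg_cong[where f=prob])

lemma L2_var_ne0:
  assumes L: "L2 M Z"
  shows "var M Z \<noteq> 0"
proof
  assume v0: "var M Z = 0"
  have [measurable]: "Z \<in> borel_measurable M" and i2: "integrable M (\<lambda>w. (Z w)\<^sup>2)" and nc: "\<not> (\<exists>c. AE w in M. Z w = c)"
    using L unfolding L2_def by auto
  have iZ: "integrable M Z" by (rule square_integrable_imp_integrable) (use i2 in auto)
  define m where "m = expect M Z"
  have eq: "(\<lambda>w. (Z w - m) * (Z w - m)) = (\<lambda>w. (Z w)\<^sup>2 - 2 * m * Z w + m * m)"
    by (auto simp: power2_eq_square algebra_simps)
  have int: "integrable M (\<lambda>w. (Z w - m) * (Z w - m))"
    unfolding eq using i2 iZ by auto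
  have "(\<integral>w. (Z w - m) * (Z w - m) \<partial>M) = 0" using v0 unfolding var_def covar_def expect_def m_def by simp
  then have "AE w in M. (Z w - m) * (Z w - m) = 0"
    using integral_nonneg_eq_0_iff_AE[OF int] by auto
  then have "AE w in M. Z w = m" by (auto elim!: eventually_mono)
  with nc show False by auto
qed

lemma covar_expand:
  assumes "integrable M Z" "integrable M W" "integrable M (\<lambda>w. Z w * W w)"
  shows "covar M Z W = expect M (\<lambda>w. Z w * W w) - expect M Z * expect M W"
proof -
  have eq: "(\<lambda>w. (Z w - expect M Z) * (W w - expect M W)) =
     (\<lambda>w. Z w * W w - expect M W * Z w - expect M Z * W w + expect M Z * expect M W)"
    by (auto simp: algebra_simps)
  show ?thesis unfolding covar_def eq using assms
    by (subst expect_def, simp add: expect_def prob_space)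
qed

lemma covar_indep:
  fixes Z W :: "'a \<Rightarrow> real"
  assumes "indep_var borel Z borel W" "integrable M Z" "integrable M W"
  shows "covar M Z W = 0"
proof -
  have "indep_var borel ((\<lambda>x. x - expect M Z) \<circ> Z) borel ((\<lambda>x. x - expect M W) \<circ> W)"
    by (rule indep_var_compose[OF assms(1)]) auto
  then have "indep_var borel (\<lambda>w. Z w - expect M Z) borel (\<lambda>w. W w - expect M W)"
    by (simp add: comp_def)
  from indep_var_lebesgue_integral[OF this] assms(2,3)
  have "covar M Z W = (\<integral>w. Z w - expect M Z \<partial>M) * (\<integral>w. W w - expect M W \<partial>M)"
    unfolding covar_def expect_def by simp
  also have "\<dots> = 0" using assms(2,3) by (simp add: expect_def prob_space)
  finally show ?thesis .
qed




lemma expect_of_bool: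
  assumes [measurable]: "Measurable.pred M P"
  shows "expect M (\<lambda>w. of_bool (P w)) = prob {w \<in> space M. P w}"
proof -
  have "expect M (\<lambda>w. of_bool (P w)) = integral\<^sup>L M (indicator {w \<in> space M. P w})"
    unfolding expect_def by (rule Bochner_Integration.integral_cong) (auto simp: indicator_def)
  also have "\<dots> = prob {w \<in> space M. P w}" by (simp add: Int_absorb2)
  finally show ?thesis .
qed

lemma integrable_of_bool:
  assumes [measurable]: "Measurable.pred M P"
  shows "integrable M (\<lambda>w. of_bool (P w) :: real)"
  by (rule integrable_const_bound[where B=1]) auto

lemma triv_ident:
  fixes Z W :: "'a \<Rightarrow> real"
  assumes [measurable]: "Z \<in> borel_measurable M" "W \<in> borel_measurable M" "A \<in> sets borel"
    and c: "AE w in M. indicator A (Z w) = (c::real)"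
  shows "prob {w \<in> space M. Z w \<in> A \<and> W w \<in> A} = prob {w \<in> space M. Z w \<in> A} * prob {w \<in> space M. W w \<in> A}"
proof (cases "c = 1")
  case True
  then have AE: "AE w in M. Z w \<in> A" using c by (auto elim!: eventually_mono simp: indicator_def)
  have "prob {w \<in> space M. Z w \<in> A \<and> W w \<in> A} = prob {w \<in> space M. W w \<in> A}"
    by (rule finite_measure_eq_AE) (use AE in auto)
  moreover have "prob {w \<in> space M. Z w \<in> A} = prob (space M)"
    by (rule finite_measure_eq_AE) (use AE in auto)
  ultimately show ?thesis by (simp add: prob_space)
next
  case False
  then have AE: "AE w in M. Z w \<notin> A" using c by (auto elim!: eventually_mono simp: indicator_def)
  have "prob {w \<in> space M. Z w \<in> A \<and> W w \<in> A} = prob {}"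
    by (rule finite_measure_eq_AE) (use AE in auto)
  moreover have "prob {w \<in> space M. Z w \<in> A} = prob {}"
    by (rule finite_measure_eq_AE) (use AE in auto)
  ultimately show ?thesis by simp
qed

lemma IC0_ident:
  fixes X Y :: "'a \<Rightarrow> real"
  assumes [measurable]: "X \<in> borel_measurable M" "Y \<in> borel_measurable M" "A \<in> sets borel"
    and IC: "IC0 M X Y"
  shows "prob {w \<in> space M. X w \<in> A \<and> Y w \<in> A} = prob {w \<in> space M. X w \<in> A} * prob {w \<in> space M. Y w \<in> A}"
proof -
  define g :: "real \<Rightarrow> real" where "g = indicator A"
  have gm: "g \<in> borel_measurable borel" unfolding g_def by measurable
  have gX: "g \<circ> X = (\<lambda>w. of_bool (X w \<in> A))" and gY: "g \<circ> Y = (\<lambda>w. of_bool (Y w \<in> A))"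
    by (auto simp: g_def indicator_def)
  have sq: "integrable M (\<lambda>w. ((g \<circ> Z) w)\<^sup>2)" if [measurable]: "Z \<in> borel_measurable M" for Z
  proof -
    have "(\<lambda>w. ((g \<circ> Z) w)\<^sup>2) = (\<lambda>w. of_bool (Z w \<in> A))" by (auto simp: g_def indicator_def)
    then show ?thesis using integrable_of_bool[of "\<lambda>w. Z w \<in> A"] by simp
  qed
  show ?thesis
  proof (cases "L2 M (g \<circ> X) \<and> L2 M (g \<circ> Y)")
    case True
    with IC gm have "corr M (g \<circ> X) (g \<circ> Y) = 0" unfolding IC0_def by blast
    moreover have "var M (g \<circ> X) \<noteq> 0" "var M (g \<circ> Y) \<noteq> 0" using True L2_var_ne0 by auto
    moreover have "var M (g \<circ> X) \<ge> 0" "var M (g \<circ> Y) \<ge> 0"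
      unfolding var_def covar_def expect_def by auto
    ultimately have cv: "covar M (g \<circ> X) (g \<circ> Y) = 0" unfolding corr_def by auto
    have prod: "(\<lambda>w. of_bool (X w \<in> A) * of_bool (Y w \<in> A)) = (\<lambda>w. of_bool (X w \<in> A \<and> Y w \<in> A) :: real)"
      by auto
    have "covar M (g \<circ> X) (g \<circ> Y) = prob {w \<in> space M. X w \<in> A \<and> Y w \<in> A} - prob {w \<in> space M. X w \<in> A} * prob {w \<in> space M. Y w \<in> A}"
    proof -
      have i1: "integrable M (\<lambda>w. of_bool (X w \<in> A) :: real)" by (rule integrable_of_bool) measurable
      have i2: "integrable M (\<lambda>w. of_bool (Y w \<in> A) :: real)" by (rule integrable_of_bool) measurable
      have i3: "integrable M (\<lambda>w. of_bool (X w \<in> A \<and> Y w \<in> A) :: real)" by (rule integrable_of_bool) measurable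
      have e1: "expect M (\<lambda>w. of_bool (X w \<in> A)) = prob {w \<in> space M. X w \<in> A}" by (rule expect_of_bool) measurable
      have e2: "expect M (\<lambda>w. of_bool (Y w \<in> A)) = prob {w \<in> space M. Y w \<in> A}" by (rule expect_of_bool) measurable
      have e3: "expect M (\<lambda>w. of_bool (X w \<in> A \<and> Y w \<in> A)) = prob {w \<in> space M. X w \<in> A \<and> Y w \<in> A}" by (rule expect_of_bool) measurable
      show ?thesis unfolding gX gY
        using covar_expand[OF i1 i2] i3 e1 e2 e3 by (simp only: prod)
    qed
    with cv show ?thesis by simp
  next
    case False
    then have "\<not> L2 M (g \<circ> X) \<or> \<not> L2 M (g \<circ> Y)" by simp
    then show ?thesis
    proof
      assume "\<not> L2 M (g \<circ> X)"
      then obtain c where "AE w in M. (g \<circ> X) w = c" using sq[of X] gm unfolding L2_def by auto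
      then have cX: "AE w in M. indicator A (X w) = c" by (simp add: g_def)
      show ?thesis by (rule triv_ident[OF _ _ _ cX]) measurable
    next
      assume "\<not> L2 M (g \<circ> Y)"
      then obtain c where "AE w in M. (g \<circ> Y) w = c" using sq[of Y] gm unfolding L2_def by auto
      then have cY: "AE w in M. indicator A (Y w) = c" by (simp add: g_def)
      have "prob {w \<in> space M. Y w \<in> A \<and> X w \<in> A} = prob {w \<in> space M. Y w \<in> A} * prob {w \<in> space M. X w \<in> A}"
        by (rule triv_ident[OF _ _ _ cY]) measurable
      then show ?thesis by (simp add: conj_commute mult.commute)
    qed
  qed
qed




lemma IC0_K:
  fixes X Y :: "'a \<Rightarrow> real"
  assumes [measurable]: "X \<in> borel_measurable M" "Y \<in> borel_measurable M"
    and ab: "a \<noteq> b" and AEX: "AE w in M. X w = a \<or> X w = b"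
    and IC: "IC0 M X Y" and B[measurable]: "B \<in> sets borel"
  shows "prob {w \<in> space M. X w = a \<and> Y w \<in> B} = prob {w \<in> space M. X w = a} * prob {w \<in> space M. Y w \<in> B}"
proof -
  define K where "K S = prob {w \<in> space M. X w = a \<and> Y w \<in> S}" for S
  define Q where "Q S = prob {w \<in> space M. Y w \<in> S}" for S
  define p where "p = prob {w \<in> space M. X w = a}"
  have pb: "prob {w \<in> space M. X w = b} = 1 - p"
  proof -
    have "prob {w \<in> space M. X w = a \<or> X w = b} = 1"
      by (rule prob_Collect_1) (measurable, rule eventually_mono[OF AEX], auto)
    moreover have "prob {w \<in> space M. X w = a \<or> X w = b} = p + prob {w \<in> space M. X w = b}"
      unfolding p_def using ab
      by (subst finite_measure_Union[symmetric]) (auto intro!: arg_cong[where f=prob])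
    ultimately show ?thesis by simp
  qed
  have Kb: "prob {w \<in> space M. X w = b \<and> Y w \<in> S} = Q S - K S" if [measurable]: "S \<in> sets borel" for S
  proof -
    have "Q S = prob {w \<in> space M. (X w = a \<and> Y w \<in> S) \<or> (X w = b \<and> Y w \<in> S)}"
      unfolding Q_def by (rule finite_measure_eq_AE) (use AEX in auto)
    also have "\<dots> = K S + prob {w \<in> space M. X w = b \<and> Y w \<in> S}"
      unfolding K_def using ab by (subst finite_measure_Union[symmetric]) (auto intro!: arg_cong[where f=prob])
    finally show ?thesis by simp
  qed
  have un: "K (S \<union> T) = p * Q (S \<union> T)"
    if [measurable]: "S \<in> sets borel" "T \<in> sets borel" and d: "S \<inter> T = {}"
      and gS: "K S = p * Q S" and gT: "K T = p * Q T" for S T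
  proof -
    have "K (S \<union> T) = K S + K T" unfolding K_def by (rule prob_split_Y[OF _ _ _ _ d]) measurable
    moreover have "Q (S \<union> T) = Q S + Q T" unfolding Q_def using prob_split_Y[of Y "\<lambda>w. True" S T] d by simp
    ultimately show ?thesis using gS gT by (simp add: algebra_simps)
  qed
  have ga: "K (C \<union> {a}) = p * Q (C \<union> {a})" if [measurable]: "C \<in> sets borel" and C: "a \<notin> C" "b \<notin> C" for C
  proof -
    have "prob {w \<in> space M. X w \<in> C \<union> {a} \<and> Y w \<in> C \<union> {a}} = prob {w \<in> space M. X w \<in> C \<union> {a}} * prob {w \<in> space M. Y w \<in> C \<union> {a}}"
      by (rule IC0_ident[OF _ _ _ IC]) measurable
    moreover have "prob {w \<in> space M. X w \<in> C \<union> {a} \<and> Y w \<in> C \<union> {a}} = K (C \<union> {a})"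
      unfolding K_def by (rule finite_measure_eq_AE) (use AEX C ab in auto)
    moreover have "prob {w \<in> space M. X w \<in> C \<union> {a}} = p"
      unfolding p_def by (rule finite_measure_eq_AE) (use AEX C ab in auto)
    ultimately show ?thesis unfolding Q_def by simp
  qed
  have gb: "K (C \<union> {b}) = p * Q (C \<union> {b})" if [measurable]: "C \<in> sets borel" and C: "a \<notin> C" "b \<notin> C" for C
  proof -
    have "prob {w \<in> space M. X w \<in> C \<union> {b} \<and> Y w \<in> C \<union> {b}} = prob {w \<in> space M. X w \<in> C \<union> {b}} * prob {w \<in> space M. Y w \<in> C \<union> {b}}"
      by (rule IC0_ident[OF _ _ _ IC]) measurable
    moreover have "prob {w \<in> space M. X w \<in> C \<union> {b} \<and> Y w \<in> C \<union> {b}} = prob {w \<in> space M. X w = b \<and> Y w \<in> C \<union> {b}}"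
      by (rule finite_measure_eq_AE) (use AEX C ab in auto)
    moreover have "prob {w \<in> space M. X w \<in> C \<union> {b}} = prob {w \<in> space M. X w = b}"
      by (rule finite_measure_eq_AE) (use AEX C ab in auto)
    moreover have "prob {w \<in> space M. X w = b \<and> Y w \<in> C \<union> {b}} = Q (C \<union> {b}) - K (C \<union> {b})"
      by (rule Kb) measurable
    ultimately have "Q (C \<union> {b}) - K (C \<union> {b}) = (1 - p) * Q (C \<union> {b})" using pb unfolding Q_def by simp
    then show ?thesis by (simp add: algebra_simps)
  qed
  have Ka: "K {a} = p * Q {a}" using ga[of "{}"] ab by simp
  have Kbb: "K {b} = p * Q {b}" using gb[of "{}"] ab by simp
  define C where "C = B - {a, b}"
  have Cm[measurable]: "C \<in> sets borel" unfolding C_def by measurable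
  have Dm: "B \<inter> {a, b} \<in> sets borel" by measurable
  have dCa: "C \<inter> {a} = {}" by (auto simp: C_def)
  have KC: "K C = p * Q C"
  proof -
    have k1: "K (C \<union> {a}) = K C + K {a}" unfolding K_def by (rule prob_split_Y[OF _ _ _ _ dCa]) measurable
    have q1: "Q (C \<union> {a}) = Q C + Q {a}" unfolding Q_def using prob_split_Y[of Y "\<lambda>w. True" C "{a}"] dCa by simp
    have g1: "K (C \<union> {a}) = p * Q (C \<union> {a})" by (rule ga) (auto simp: C_def)
    have "K C = p * (Q C + Q {a}) - p * Q {a}" using k1 q1 g1 Ka by simp
    then show ?thesis by (simp add: algebra_simps)
  qed
  have Kab: "K {a, b} = p * Q {a, b}"
  proof -
    have "K ({a} \<union> {b}) = p * Q ({a} \<union> {b})" by (rule un) (use Ka Kbb ab in auto)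
    moreover have "{a} \<union> {b} = {a, b}" by auto
    ultimately show ?thesis by metis
  qed
  have KD: "K (B \<inter> {a, b}) = p * Q (B \<inter> {a, b})"
  proof (cases "a \<in> B"; cases "b \<in> B")
    assume "a \<in> B" "b \<in> B" then have "B \<inter> {a, b} = {a, b}" by auto
    then show ?thesis using Kab by simp
  next
    assume "a \<in> B" "b \<notin> B" then have "B \<inter> {a, b} = {a}" by auto
    then show ?thesis using Ka by simp
  next
    assume "a \<notin> B" "b \<in> B" then have "B \<inter> {a, b} = {b}" by auto
    then show ?thesis using Kbb by simp
  next
    assume "a \<notin> B" "b \<notin> B" then have "B \<inter> {a, b} = {}" by auto
    then show ?thesis by (simp add: K_def Q_def)
  qed
  have "K B = p * Q B"
  proof -
    have "C \<union> (B \<inter> {a, b}) = B" unfolding C_def by auto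
    moreover have "K (C \<union> (B \<inter> {a, b})) = p * Q (C \<union> (B \<inter> {a, b}))"
    proof (rule un[OF _ _ _ KC KD])
      show "C \<inter> (B \<inter> {a, b}) = {}" unfolding C_def by auto
    qed (rule Cm, rule Dm)
    ultimately show ?thesis by simp
  qed
  then show ?thesis unfolding K_def Q_def p_def .
qed


lemma indep_IC0:
  fixes X Y :: "'a \<Rightarrow> real"
  assumes LX: "L2 M X" and LY: "L2 M Y" and ind: "indep_var borel X borel Y"
  shows "IC0 M X Y"
proof -
  have intL: "integrable M Z" if "L2 M Z" for Z :: "'a \<Rightarrow> real"
  proof -
    have m: "Z \<in> borel_measurable M" and i: "integrable M (\<lambda>w. (Z w)\<^sup>2)" using that unfolding L2_def by auto
    show ?thesis using m i by (rule square_integrable_imp_integrable)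
  qed
  have c0: "covar M X Y = 0" by (rule covar_indep[OF ind intL[OF LX] intL[OF LY]])
  have cg: "corr M (g \<circ> X) (g \<circ> Y) = 0"
    if gm: "g \<in> borel_measurable borel" and L: "L2 M (g \<circ> X)" "L2 M (g \<circ> Y)" for g :: "real \<Rightarrow> real"
  proof -
    have "indep_var borel (g \<circ> X) borel (g \<circ> Y)" by (rule indep_var_compose[OF ind gm gm])
    then have "covar M (g \<circ> X) (g \<circ> Y) = 0" by (rule covar_indep[OF _ intL[OF L(1)] intL[OF L(2)]])
    then show ?thesis unfolding corr_def by simp
  qed
  show ?thesis unfolding IC0_def
  proof (intro conjI ballI impI)
    show "corr M X Y = 0" unfolding corr_def c0 by simp
  next
    fix g :: "real \<Rightarrow> real" assume "g \<in> borel_measurable borel" "L2 M (g \<circ> X) \<and> L2 M (g \<circ> Y)"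
    then show "corr M (g \<circ> X) (g \<circ> Y) = 0" using cg by blast
  qed
qed

end

theorem proposition4:
  fixes M :: "'a measure" and X Y :: "'a \<Rightarrow> real"
  assumes "prob_space M"
    and "L2 M X" and "L2 M Y"
    and "biatomic M X"
  shows "(quasi_indep M X Y \<longrightarrow> prob_space.indep_var M borel X borel Y)
    \<and> (IC0 M X Y \<longleftrightarrow> prob_space.indep_var M borel X borel Y)"
proof -
  interpret prob_space M by fact
  have Xm[measurable]: "X \<in> borel_measurable M" and Ym[measurable]: "Y \<in> borel_measurable M"
    using assms(2,3) unfolding L2_def by auto
  obtain a0 b0 where s0: "supp M X = {a0, b0}" "a0 \<noteq> b0"
    using assms(4) unfolding biatomic_def by (auto simp: card_2_iff)
  obtain a b where s: "supp M X = {a, b}" and ab: "a < b"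
  proof (cases "a0 < b0")
    case True then show ?thesis using that s0 by blast
  next
    case False then have "b0 < a0" using s0 by auto
    then show ?thesis using that[of b0 a0] s0 by (auto simp: insert_commute)
  qed
  have AEX: "AE w in M. X w = a \<or> X w = b"
    using AE_in_supp[of X] s by (auto elim!: eventually_mono)
  have E[measurable]: "{w \<in> space M. X w = a} \<in> events" by measurable
  have ab': "a \<noteq> b" using ab by simp
  have part1: "indep_var borel X borel Y" if Q: "quasi_indep M X Y"
  proof (rule indep_from_K[OF Xm Ym ab' AEX])
    fix B :: "real set" assume B: "B \<in> sets borel"
    have "prob {w \<in> space M. w \<in> {w \<in> space M. X w = a} \<and> Y w \<in> B} =
        prob {w \<in> space M. X w = a} * prob {w \<in> space M. Y w \<in> B}"
    proof (rule cdf_to_borel[OF Ym E _ B])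
      fix y
      have "prob {w \<in> space M. X w = a \<and> Y w \<le> y} = prob {w \<in> space M. X w = a} * prob {w \<in> space M. Y w \<le> y}"
        by (rule quasi_K[OF Xm Ym ab AEX Q])
      moreover have "{w \<in> space M. w \<in> {w \<in> space M. X w = a} \<and> Y w \<le> y} = {w \<in> space M. X w = a \<and> Y w \<le> y}" by auto
      ultimately show "prob {w \<in> space M. w \<in> {w \<in> space M. X w = a} \<and> Y w \<le> y} = prob {w \<in> space M. X w = a} * prob {w \<in> space M. Y w \<le> y}"
        by simp
    qed
    moreover have "{w \<in> space M. w \<in> {w \<in> space M. X w = a} \<and> Y w \<in> B} = {w \<in> space M. X w = a \<and> Y w \<in> B}" by auto
    ultimately show "prob {w \<in> space M. X w = a \<and> Y w \<in> B} = prob {w \<in> space M. X w = a} * prob {w \<in> space M. Y w \<in> B}"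
      by simp
  qed
  have part2: "indep_var borel X borel Y" if IC: "IC0 M X Y"
  proof (rule indep_from_K[OF Xm Ym ab' AEX])
    fix B :: "real set" assume B: "B \<in> sets borel"
    show "prob {w \<in> space M. X w = a \<and> Y w \<in> B} = prob {w \<in> space M. X w = a} * prob {w \<in> space M. Y w \<in> B}"
      by (rule IC0_K[OF Xm Ym ab' AEX IC B])
  qed
  have part3: "IC0 M X Y" if "indep_var borel X borel Y"
    by (rule indep_IC0[OF assms(2,3) that])
  show ?thesis
  proof (rule conjI)
    show "quasi_indep M X Y \<longrightarrow> indep_var borel X borel Y" by (rule impI) (rule part1)
    show "IC0 M X Y \<longleftrightarrow> indep_var borel X borel Y"
    proof (rule iffI)
      assume "IC0 M X Y" then show "indep_var borel X borel Y" by (rule part2)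
    next
      assume "indep_var borel X borel Y" then show "IC0 M X Y" by (rule part3)
    qed
  qed
qed

end
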